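(* Let $\Bbbk$ be an algebraically closed field of characteristic zero, $G$ a finite group, $\chi:G\to\Bbbk^\times$ a linear character, $g\in Z(G)$, $n\geq2$ the multiplicative order of $\chi(g)$, and let $H$ be either the $\Bbbk$-algebra generated by $\Bbbk G$ and $z$ with relations $z^n=0$, $zs=\chi(s)sz$ ($s\in G$), or (when $\chi^n=1$ and $g^n\neq1$) the $\Bbbk$-algebra generated by $\Bbbk G$ and $z$ with relations $z^n=g^n-1$, $zs=\chi(s)sz$ ($s\in G$). Then $z^{l+1}\in(z^l(1-e_s))$ for all $0\leq s\leq p-1$ and $0\leq l\leq n-1$.
   Context: $\chi_0,\dots,\chi_{p-1}$ are the irreducible characters of $G$ and $e_s=\frac{\chi_s(1)}{|G|}\sum_{h\in G}\chi_s(h)h^{-1}$. $(a)$ denotes the two-sided ideal of $H$ generated by $a$. *)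

theory Defs
  imports "HOL-Algebra.Group" "Jordan_Normal_Form.Matrix" "HOL-Computational_Algebra.Polynomial"
begin

definition alg_closed_field :: "'k::field itself \<Rightarrow> bool" where
  "alg_closed_field _ \<longleftrightarrow> (\<forall>q :: 'k poly. degree q \<ge> 1 \<longrightarrow> (\<exists>x. poly q x = 0))"

definition k_algebra_map :: "('k::field \<Rightarrow> 'a::ring_1) \<Rightarrow> bool" where
  "k_algebra_map \<iota> \<longleftrightarrow> \<iota> 1 = 1 \<and> (\<forall>x y. \<iota> (x + y) = \<iota> x + \<iota> y) \<and>
     (\<forall>x y. \<iota> (x * y) = \<iota> x * \<iota> y) \<and> (\<forall>c a. \<iota> c * a = a * \<iota> c)"

definition two_sided_ideal_gen :: "'a::ring_1 \<Rightarrow> 'a set" where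
  "two_sided_ideal_gen a = {x. \<exists>xs :: ('a \<times> 'a) list. x = sum_list (map (\<lambda>(u,v). u * a * v) xs)}"

definition mat_rep :: "('g, 'm) monoid_scheme \<Rightarrow> nat \<Rightarrow> ('g \<Rightarrow> 'k::field mat) \<Rightarrow> bool" where
  "mat_rep G d \<rho> \<longleftrightarrow> (\<forall>s\<in>carrier G. \<rho> s \<in> carrier_mat d d) \<and> \<rho> \<one>\<^bsub>G\<^esub> = 1\<^sub>m d \<and>
     (\<forall>s\<in>carrier G. \<forall>t\<in>carrier G. \<rho> (s \<otimes>\<^bsub>G\<^esub> t) = \<rho> s * \<rho> t)"

definition is_subspace_vec :: "nat \<Rightarrow> 'k::field vec set \<Rightarrow> bool" where
  "is_subspace_vec d W \<longleftrightarrow> W \<subseteq> carrier_vec d \<and> 0\<^sub>v d \<in> W \<and>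
     (\<forall>v\<in>W. \<forall>w\<in>W. v + w \<in> W) \<and> (\<forall>c. \<forall>v\<in>W. c \<cdot>\<^sub>v v \<in> W)"

definition irr_mat_rep :: "('g, 'm) monoid_scheme \<Rightarrow> nat \<Rightarrow> ('g \<Rightarrow> 'k::field mat) \<Rightarrow> bool" where
  "irr_mat_rep G d \<rho> \<longleftrightarrow> d > 0 \<and> mat_rep G d \<rho> \<and>
     (\<forall>W. is_subspace_vec d W \<and> (\<forall>s\<in>carrier G. \<forall>w\<in>W. \<rho> s *\<^sub>v w \<in> W)
        \<longrightarrow> W = {0\<^sub>v d} \<or> W = carrier_vec d)"

definition irr_char :: "('g, 'm) monoid_scheme \<Rightarrow> ('g \<Rightarrow> 'k::field) \<Rightarrow> bool" where
  "irr_char G \<psi> \<longleftrightarrow> (\<exists>d (\<rho> :: 'g \<Rightarrow> 'k mat). irr_mat_rep G d \<rho> \<and> (\<forall>s\<in>carrier G. \<psi> s = (\<Sum>i<d. \<rho> s $$ (i, i))))"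

text \<open>The central idempotent e_psi = psi(1)/|G| sum_h psi(h) h^{-1}, mapped into the algebra.\<close>
definition char_idem :: "('g, 'm) monoid_scheme \<Rightarrow> ('k::field \<Rightarrow> 'a::ring_1) \<Rightarrow> ('g \<Rightarrow> 'a) \<Rightarrow> ('g \<Rightarrow> 'k) \<Rightarrow> 'a" where
  "char_idem G \<iota> \<phi> \<psi> = \<iota> (\<psi> \<one>\<^bsub>G\<^esub> / of_nat (card (carrier G))) *
     (\<Sum>h\<in>carrier G. \<iota> (\<psi> h) * \<phi> (inv\<^bsub>G\<^esub> h))"

end

theory Submission
  imports Defs "Jordan_Normal_Form.Char_Poly"
begin


lemma schur_central:
  fixes G :: "('g, 'm) monoid_scheme" and \<rho> :: "'g \<Rightarrow> 'k::field mat"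
  assumes ac: "alg_closed_field TYPE('k)" and irr: "irr_mat_rep G d \<rho>"
    and gG: "g \<in> carrier G" and cen: "\<forall>s\<in>carrier G. g \<otimes>\<^bsub>G\<^esub> s = s \<otimes>\<^bsub>G\<^esub> g"
  shows "\<exists>lam. \<forall>h\<in>carrier G. \<rho> g * \<rho> h = lam \<cdot>\<^sub>m \<rho> h"
proof -
  from irr have d: "d > 0" and rep: "mat_rep G d \<rho>"
    and inv: "\<And>W. is_subspace_vec d W \<Longrightarrow> (\<forall>s\<in>carrier G. \<forall>w\<in>W. \<rho> s *\<^sub>v w \<in> W) \<Longrightarrow> W = {0\<^sub>v d} \<or> W = carrier_vec d"
    unfolding irr_mat_rep_def by auto
  from rep have car: "\<And>s. s \<in> carrier G \<Longrightarrow> \<rho> s \<in> carrier_mat d d"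
    and mul: "\<And>s t. s \<in> carrier G \<Longrightarrow> t \<in> carrier G \<Longrightarrow> \<rho> (s \<otimes>\<^bsub>G\<^esub> t) = \<rho> s * \<rho> t"
    unfolding mat_rep_def by auto
  have A: "\<rho> g \<in> carrier_mat d d" using car gG .
  have "degree (char_poly (\<rho> g)) = d" using degree_monic_char_poly[OF A] by auto
  with d ac obtain lam where "poly (char_poly (\<rho> g)) lam = 0"
    unfolding alg_closed_field_def by (metis One_nat_def Suc_leI)
  then have "eigenvalue (\<rho> g) lam" using eigenvalue_root_char_poly[OF A] by simp
  then obtain v where ev: "eigenvector (\<rho> g) v lam" unfolding eigenvalue_def by auto
  then have v: "v \<in> carrier_vec d" "v \<noteq> 0\<^sub>v d" "\<rho> g *\<^sub>v v = lam \<cdot>\<^sub>v v"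
    unfolding eigenvector_def using A by auto
  define W where "W = {w \<in> carrier_vec d. \<rho> g *\<^sub>v w = lam \<cdot>\<^sub>v w}"
  have sub: "is_subspace_vec d W"
    unfolding is_subspace_vec_def W_def using A
    by (auto simp: mult_add_distrib_mat_vec mult_mat_vec smult_add_distrib_vec smult_smult_assoc mult.commute)
  have invar: "\<forall>s\<in>carrier G. \<forall>w\<in>W. \<rho> s *\<^sub>v w \<in> W"
  proof (intro ballI)
    fix s w assume s: "s \<in> carrier G" and w: "w \<in> W"
    have wc: "w \<in> carrier_vec d" and wv: "\<rho> g *\<^sub>v w = lam \<cdot>\<^sub>v w" using w unfolding W_def by auto
    have "\<rho> g *\<^sub>v (\<rho> s *\<^sub>v w) = (\<rho> g * \<rho> s) *\<^sub>v w"
      using A car[OF s] wc by (simp add: assoc_mult_mat_vec)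
    also have "\<rho> g * \<rho> s = \<rho> s * \<rho> g" using mul[OF gG s] mul[OF s gG] cen s by metis
    also have "(\<rho> s * \<rho> g) *\<^sub>v w = \<rho> s *\<^sub>v (\<rho> g *\<^sub>v w)"
      using A car[OF s] wc by (simp add: assoc_mult_mat_vec)
    also have "\<dots> = lam \<cdot>\<^sub>v (\<rho> s *\<^sub>v w)" using wv car[OF s] wc by (simp add: mult_mat_vec)
    finally show "\<rho> s *\<^sub>v w \<in> W" unfolding W_def using car[OF s] wc by auto
  qed
  have "v \<in> W" using v unfolding W_def by auto
  then have Wall: "W = carrier_vec d" using inv[OF sub invar] v(2) by auto
  show ?thesis
  proof (intro exI ballI)
    fix h assume h: "h \<in> carrier G"
    have B: "\<rho> h \<in> carrier_mat d d" using car h .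
    show "\<rho> g * \<rho> h = lam \<cdot>\<^sub>m \<rho> h"
    proof (rule eq_matI)
      fix i j assume i: "i < dim_row (lam \<cdot>\<^sub>m \<rho> h)" and j: "j < dim_col (lam \<cdot>\<^sub>m \<rho> h)"
      have ij: "i < d" "j < d" using i j B by auto
      have "col (\<rho> h) j \<in> W" using Wall B by auto
      then have e: "\<rho> g *\<^sub>v col (\<rho> h) j = lam \<cdot>\<^sub>v col (\<rho> h) j" unfolding W_def by auto
      have "(\<rho> g * \<rho> h) $$ (i, j) = col (\<rho> g * \<rho> h) j $ i" using ij A B by auto
      also have "\<dots> = (\<rho> g *\<^sub>v col (\<rho> h) j) $ i" using col_mult2[OF A B ij(2)] by simp
      also have "\<dots> = (lam \<cdot>\<^sub>m \<rho> h) $$ (i, j)" unfolding e using ij B by auto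
      finally show "(\<rho> g * \<rho> h) $$ (i, j) = (lam \<cdot>\<^sub>m \<rho> h) $$ (i, j)" .
    qed (use A B in auto)
  qed
qed



lemma ideal_gen: "u * a * v \<in> two_sided_ideal_gen a"
  unfolding two_sided_ideal_gen_def by (rule CollectI, rule exI[of _ "[(u,v)]"]) simp

lemma ideal_add: "x \<in> two_sided_ideal_gen a \<Longrightarrow> y \<in> two_sided_ideal_gen a \<Longrightarrow> x + y \<in> two_sided_ideal_gen a"
proof -
  assume "x \<in> two_sided_ideal_gen a" "y \<in> two_sided_ideal_gen a"
  then obtain xs ys where "x = sum_list (map (\<lambda>(p,q). p * a * q) xs)" "y = sum_list (map (\<lambda>(p,q). p * a * q) ys)"
    unfolding two_sided_ideal_gen_def by blast
  then have "x + y = sum_list (map (\<lambda>(p,q). p * a * q) (xs @ ys))" by simp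
  then show ?thesis unfolding two_sided_ideal_gen_def by blast
qed

lemma ideal_mult: "x \<in> two_sided_ideal_gen a \<Longrightarrow> u * x * v \<in> two_sided_ideal_gen a"
proof -
  assume "x \<in> two_sided_ideal_gen a"
  then obtain xs where x: "x = sum_list (map (\<lambda>(p,q). p * a * q) xs)" unfolding two_sided_ideal_gen_def by auto
  have "u * x * v = sum_list (map (\<lambda>(p,q). p * a * q) (map (\<lambda>(p,q). (u * p, q * v)) xs))"
    unfolding x by (induction xs) (auto simp: algebra_simps)
  then show ?thesis unfolding two_sided_ideal_gen_def by blast
qed

lemma ideal_diff: "x \<in> two_sided_ideal_gen a \<Longrightarrow> y \<in> two_sided_ideal_gen a \<Longrightarrow> x - y \<in> two_sided_ideal_gen a"
proof -
  assume x: "x \<in> two_sided_ideal_gen a" and y: "y \<in> two_sided_ideal_gen a"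
  have "(-1) * y * 1 \<in> two_sided_ideal_gen a" by (rule ideal_mult[OF y])
  from ideal_add[OF x this] show ?thesis by simp
qed

lemma iota_props:
  assumes "k_algebra_map \<iota>"
  shows "\<iota> 0 = 0" "\<iota> (x - y) = \<iota> x - \<iota> y" "\<iota> (x * y) = \<iota> x * \<iota> y" "\<iota> c * a = a * \<iota> c" "\<iota> 1 = 1"
    "\<iota> (sum f A) = sum (\<lambda>i. \<iota> (f i)) A"
proof -
  have add: "\<And>x y. \<iota> (x + y) = \<iota> x + \<iota> y" using assms unfolding k_algebra_map_def by auto
  show z: "\<iota> 0 = 0" using add[of 0 0] by simp
  show "\<iota> (x - y) = \<iota> x - \<iota> y" using add[of "x - y" y] by (simp add: algebra_simps)
  show "\<iota> (x * y) = \<iota> x * \<iota> y" "\<iota> c * a = a * \<iota> c" "\<iota> 1 = 1" using assms unfolding k_algebra_map_def by blast+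
  show "\<iota> (sum f A) = sum (\<lambda>i. \<iota> (f i)) A"
    by (induction A rule: infinite_finite_induct) (auto simp: z add)
qed

definition EE :: "('g, 'm) monoid_scheme \<Rightarrow> ('k::field \<Rightarrow> 'a::ring_1) \<Rightarrow> ('g \<Rightarrow> 'a) \<Rightarrow> ('g \<Rightarrow> 'k) \<Rightarrow> 'a" where
  "EE G \<iota> \<phi> \<alpha> = (\<Sum>h\<in>carrier G. \<iota> (\<alpha> h) * \<phi> (inv\<^bsub>G\<^esub> h))"

lemma char_idem_EE: assumes "k_algebra_map \<iota>"
  shows "char_idem G \<iota> \<phi> \<psi> = EE G \<iota> \<phi> (\<lambda>h. (\<psi> \<one>\<^bsub>G\<^esub> / of_nat (card (carrier G))) * \<psi> h)"
  unfolding char_idem_def EE_def sum_distrib_left iota_props(3,6)[OF assms] by (simp add: mult.assoc)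

lemma EE_right_g:
  fixes G :: "('g, 'm) monoid_scheme"
  assumes gr: "group G" and i: "k_algebra_map \<iota>" and gG: "g \<in> carrier G"
    and phm: "\<forall>s\<in>carrier G. \<forall>t\<in>carrier G. \<phi> (s \<otimes>\<^bsub>G\<^esub> t) = \<phi> s * \<phi> t"
  shows "EE G \<iota> \<phi> \<alpha> * \<phi> g = EE G \<iota> \<phi> (\<lambda>h. \<alpha> (g \<otimes>\<^bsub>G\<^esub> h))"
proof -
  interpret group G by fact
  have "EE G \<iota> \<phi> \<alpha> * \<phi> g = (\<Sum>h\<in>carrier G. \<iota> (\<alpha> h) * \<phi> (inv\<^bsub>G\<^esub> h \<otimes>\<^bsub>G\<^esub> g))"
    unfolding EE_def sum_distrib_right using gG phm by (auto simp: mult.assoc intro!: sum.cong)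
  also have "\<dots> = (\<Sum>h\<in>(\<lambda>h. g \<otimes>\<^bsub>G\<^esub> h) ` carrier G. \<iota> (\<alpha> h) * \<phi> (inv\<^bsub>G\<^esub> h \<otimes>\<^bsub>G\<^esub> g))"
    using surj_const_mult[OF gG] by simp
  also have "\<dots> = (\<Sum>h\<in>carrier G. \<iota> (\<alpha> (g \<otimes>\<^bsub>G\<^esub> h)) * \<phi> (inv\<^bsub>G\<^esub> (g \<otimes>\<^bsub>G\<^esub> h) \<otimes>\<^bsub>G\<^esub> g))"
    by (subst sum.reindex) (auto simp: inj_on_def gG)
  also have "\<dots> = EE G \<iota> \<phi> (\<lambda>h. \<alpha> (g \<otimes>\<^bsub>G\<^esub> h))"
    unfolding EE_def using gG by (intro sum.cong) (auto simp: inv_mult_group m_assoc)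
  finally show ?thesis .
qed

lemma EE_z:
  fixes G :: "('g, 'm) monoid_scheme"
  assumes gr: "group G" and i: "k_algebra_map \<iota>"
    and chm: "\<forall>s\<in>carrier G. \<forall>t\<in>carrier G. \<chi> (s \<otimes>\<^bsub>G\<^esub> t) = \<chi> s * \<chi> t"
    and ch0: "\<forall>s\<in>carrier G. \<chi> s \<noteq> 0"
    and zc: "\<forall>s\<in>carrier G. z * \<phi> s = \<iota> (\<chi> s) * \<phi> s * z"
  shows "EE G \<iota> \<phi> \<alpha> * z = z * EE G \<iota> \<phi> (\<lambda>h. \<alpha> h * \<chi> h)"
proof -
  interpret group G by fact
  have c1: "\<chi> \<one>\<^bsub>G\<^esub> = 1" using chm ch0 by (metis one_closed r_one mult_cancel_left2)
  have "\<iota> (\<alpha> h) * \<phi> (inv\<^bsub>G\<^esub> h) * z = z * (\<iota> (\<alpha> h * \<chi> h) * \<phi> (inv\<^bsub>G\<^esub> h))" if h: "h \<in> carrier G" for h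
  proof -
    have "\<chi> h * \<chi> (inv\<^bsub>G\<^esub> h) = 1" using chm h c1 by (metis inv_closed r_inv)
    then have "\<iota> (\<chi> h) * \<iota> (\<chi> (inv\<^bsub>G\<^esub> h)) = 1" by (metis iota_props(3,5)[OF i])
    have "z * (\<iota> (\<alpha> h * \<chi> h) * \<phi> (inv\<^bsub>G\<^esub> h)) = \<iota> (\<alpha> h * \<chi> h) * (z * \<phi> (inv\<^bsub>G\<^esub> h))"
      by (subst mult.assoc[symmetric], subst iota_props(4)[OF i, symmetric, of z], simp add: mult.assoc)
    also have "\<dots> = \<iota> (\<alpha> h * \<chi> h) * \<iota> (\<chi> (inv\<^bsub>G\<^esub> h)) * \<phi> (inv\<^bsub>G\<^esub> h) * z"
      using zc h by (simp add: mult.assoc)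
    also have "\<dots> = \<iota> (\<alpha> h) * (\<iota> (\<chi> h) * \<iota> (\<chi> (inv\<^bsub>G\<^esub> h))) * \<phi> (inv\<^bsub>G\<^esub> h) * z"
      using iota_props(3)[OF i] by (simp add: mult.assoc)
    finally show ?thesis using \<open>\<iota> (\<chi> h) * \<iota> (\<chi> (inv\<^bsub>G\<^esub> h)) = 1\<close> by simp
  qed
  then show ?thesis unfolding EE_def sum_distrib_right sum_distrib_left by (intro sum.cong refl) blast
qed

lemma EE_smult: assumes "k_algebra_map \<iota>"
  shows "EE G \<iota> \<phi> (\<lambda>h. c * \<alpha> h) = \<iota> c * EE G \<iota> \<phi> \<alpha>"
  unfolding EE_def sum_distrib_left iota_props(3,6)[OF assms] by (simp add: mult.assoc)


theorem lemma4p1: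
  fixes G :: "('g, 'm) monoid_scheme"
    and \<iota> :: "'k::field_char_0 \<Rightarrow> 'a::ring_1"
    and \<phi> :: "'g \<Rightarrow> 'a"
    and \<chi> :: "'g \<Rightarrow> 'k"
    and g :: 'g and z :: 'a and n :: nat
  assumes "alg_closed_field TYPE('k)"
    and "group G" and "finite (carrier G)"
    and "\<forall>s\<in>carrier G. \<forall>t\<in>carrier G. \<chi> (s \<otimes>\<^bsub>G\<^esub> t) = \<chi> s * \<chi> t"
    and "\<forall>s\<in>carrier G. \<chi> s \<noteq> 0"
    and "g \<in> carrier G" and "\<forall>s\<in>carrier G. g \<otimes>\<^bsub>G\<^esub> s = s \<otimes>\<^bsub>G\<^esub> g"
    and "n \<ge> 2" and "\<chi> g ^ n = 1" and "\<forall>m. 0 < m \<and> m < n \<longrightarrow> \<chi> g ^ m \<noteq> 1"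
    and "k_algebra_map \<iota>"
    and "\<phi> \<one>\<^bsub>G\<^esub> = 1"
    and "\<forall>s\<in>carrier G. \<forall>t\<in>carrier G. \<phi> (s \<otimes>\<^bsub>G\<^esub> t) = \<phi> s * \<phi> t"
    and "\<forall>s\<in>carrier G. z * \<phi> s = \<iota> (\<chi> s) * \<phi> s * z"
    and "z ^ n = 0 \<or>
         ((\<forall>s\<in>carrier G. \<chi> s ^ n = 1) \<and> g [^]\<^bsub>G\<^esub> n \<noteq> \<one>\<^bsub>G\<^esub> \<and>
          z ^ n = \<phi> (g [^]\<^bsub>G\<^esub> n) - 1)"
    and "irr_char G \<psi>"
    and "l < n"
  shows "z ^ (l + 1) \<in> two_sided_ideal_gen (z ^ l * (1 - char_idem G \<iota> \<phi> \<psi>))"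
proof -
  note ac = assms(1) and gr = assms(2) and chm = assms(4) and ch0 = assms(5) and gG = assms(6)
    and cen = assms(7) and i = assms(11) and phm = assms(13) and zc = assms(14)
  interpret group G by fact
  from assms(16) obtain d and \<rho> :: "'g \<Rightarrow> 'k mat" where irr: "irr_mat_rep G d \<rho>"
    and psi: "\<forall>s\<in>carrier G. \<psi> s = (\<Sum>i<d. \<rho> s $$ (i, i))"
    unfolding irr_char_def by blast
  from irr have rep: "mat_rep G d \<rho>" unfolding irr_mat_rep_def by auto
  from rep have car: "\<And>s. s \<in> carrier G \<Longrightarrow> \<rho> s \<in> carrier_mat d d"
    and mul: "\<And>s t. s \<in> carrier G \<Longrightarrow> t \<in> carrier G \<Longrightarrow> \<rho> (s \<otimes>\<^bsub>G\<^esub> t) = \<rho> s * \<rho> t"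
    and one: "\<rho> \<one>\<^bsub>G\<^esub> = 1\<^sub>m d"
    unfolding mat_rep_def by auto
  obtain lam where lam: "\<forall>h\<in>carrier G. \<rho> g * \<rho> h = lam \<cdot>\<^sub>m \<rho> h"
    using schur_central[OF ac irr gG cen] by blast
  have psig: "\<psi> (g \<otimes>\<^bsub>G\<^esub> h) = lam * \<psi> h" if h: "h \<in> carrier G" for h
  proof -
    have "\<psi> (g \<otimes>\<^bsub>G\<^esub> h) = (\<Sum>i<d. (lam \<cdot>\<^sub>m \<rho> h) $$ (i, i))"
      using psi h gG mul lam by simp
    also have "\<dots> = (\<Sum>i<d. lam * \<rho> h $$ (i, i))"
      using car[OF h] by (intro sum.cong) auto
    finally show ?thesis using psi h by (simp add: sum_distrib_left)
  qed
  have psi1: "\<psi> \<one>\<^bsub>G\<^esub> = of_nat d" using psi one by simp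
  have dpos: "d > 0" using irr unfolding irr_mat_rep_def by auto
  have lam0: "lam \<noteq> 0"
  proof
    assume "lam = 0"
    then have "\<psi> (g \<otimes>\<^bsub>G\<^esub> inv\<^bsub>G\<^esub> g) = 0" using psig[of "inv\<^bsub>G\<^esub> g"] gG by simp
    then have "\<psi> \<one>\<^bsub>G\<^esub> = 0" using gG by simp
    then show False using psi1 dpos gG by simp
  qed
  have chg: "\<chi> g \<noteq> 1" using assms(10) assms(8) by (metis One_nat_def less_le_trans lessI numeral_2_eq_2 power_one_right zero_less_one)
  define c where "c = \<psi> \<one>\<^bsub>G\<^esub> / of_nat (card (carrier G))"
  define \<alpha> where "\<alpha> = (\<lambda>h. c * \<psi> h)"
  define \<beta> where "\<beta> = (\<lambda>h. \<alpha> h * \<chi> h)"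
  define E where "E = EE G \<iota> \<phi> \<alpha>"
  define F where "F = EE G \<iota> \<phi> \<beta>"
  define \<mu> where "\<mu> = lam * \<chi> g"
  have e: "char_idem G \<iota> \<phi> \<psi> = E" unfolding E_def \<alpha>_def c_def using char_idem_EE[OF i] by simp
  have Eg: "E * \<phi> g = \<iota> lam * E"
  proof -
    have "E * \<phi> g = EE G \<iota> \<phi> (\<lambda>h. \<alpha> (g \<otimes>\<^bsub>G\<^esub> h))" unfolding E_def by (rule EE_right_g[OF gr i gG phm])
    also have "\<dots> = EE G \<iota> \<phi> (\<lambda>h. lam * \<alpha> h)"
      unfolding EE_def \<alpha>_def using psig by (intro sum.cong refl) (simp add: ac_simps)
    finally show ?thesis unfolding E_def using EE_smult[OF i] by metis
  qed
  have Fg: "F * \<phi> g = \<iota> \<mu> * F"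
  proof -
    have "F * \<phi> g = EE G \<iota> \<phi> (\<lambda>h. \<beta> (g \<otimes>\<^bsub>G\<^esub> h))" unfolding F_def by (rule EE_right_g[OF gr i gG phm])
    also have "\<dots> = EE G \<iota> \<phi> (\<lambda>h. \<mu> * \<beta> h)"
      unfolding EE_def \<alpha>_def \<beta>_def \<mu>_def using psig chm gG by (intro sum.cong refl) (simp add: ac_simps)
    finally show ?thesis unfolding F_def using EE_smult[OF i] by metis
  qed
  have Ez: "E * z = z * F" unfolding E_def F_def \<beta>_def by (rule EE_z[OF gr i chm ch0 zc])
  have cE: "E * \<iota> x = \<iota> x * E" for x using iota_props(4)[OF i] by metis
  have cF: "F * \<iota> x = \<iota> x * F" for x using iota_props(4)[OF i] by metis
  define a where "a = z ^ l * (1 - E)"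
  define J where "J = two_sided_ideal_gen a"
  define w where "w = z ^ (l + 1)"
  have x: "w * (1 - E) \<in> J"
  proof -
    have "z * a * 1 \<in> J" unfolding J_def by (rule ideal_gen)
    moreover have "z * a * 1 = w * (1 - E)" unfolding a_def w_def by (simp add: mult.assoc)
    ultimately show ?thesis by simp
  qed
  have y: "w * (1 - F) \<in> J"
  proof -
    have "1 * a * z \<in> J" unfolding J_def by (rule ideal_gen)
    moreover have "1 * a * z = w * (1 - F)"
    proof -
      have "1 * a * z = z ^ l * z - z ^ l * (E * z)" unfolding a_def by (simp add: algebra_simps)
      also have "\<dots> = w - w * F" unfolding Ez w_def by (simp add: mult.assoc[symmetric] power_commutes)
      finally show ?thesis by (simp add: algebra_simps)
    qed
    ultimately show ?thesis by simp
  qed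
  have x1: "w * (\<phi> g - \<iota> lam) \<in> J"
  proof -
    have "1 * (w * (1 - E)) * \<phi> g - 1 * (w * (1 - E)) * \<iota> lam \<in> J"
      using ideal_diff[OF ideal_mult[OF x[unfolded J_def]] ideal_mult[OF x[unfolded J_def]]] unfolding J_def .
    moreover have "1 * (w * (1 - E)) * \<phi> g - 1 * (w * (1 - E)) * \<iota> lam = w * (\<phi> g - \<iota> lam)"
    proof -
      have "1 * (w * (1 - E)) * \<phi> g - 1 * (w * (1 - E)) * \<iota> lam
          = w * \<phi> g - w * (E * \<phi> g) - w * \<iota> lam + w * (E * \<iota> lam)" by (simp add: algebra_simps)
      also have "\<dots> = w * (\<phi> g - \<iota> lam)" unfolding Eg cE by (simp add: algebra_simps)
      finally show ?thesis .
    qed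
    ultimately show ?thesis by simp
  qed
  have y1: "w * (\<phi> g - \<iota> \<mu>) \<in> J"
  proof -
    have "1 * (w * (1 - F)) * \<phi> g - 1 * (w * (1 - F)) * \<iota> \<mu> \<in> J"
      using ideal_diff[OF ideal_mult[OF y[unfolded J_def]] ideal_mult[OF y[unfolded J_def]]] unfolding J_def .
    moreover have "1 * (w * (1 - F)) * \<phi> g - 1 * (w * (1 - F)) * \<iota> \<mu> = w * (\<phi> g - \<iota> \<mu>)"
    proof -
      have "1 * (w * (1 - F)) * \<phi> g - 1 * (w * (1 - F)) * \<iota> \<mu>
          = w * \<phi> g - w * (F * \<phi> g) - w * \<iota> \<mu> + w * (F * \<iota> \<mu>)" by (simp add: algebra_simps)
      also have "\<dots> = w * (\<phi> g - \<iota> \<mu>)" unfolding Fg cF by (simp add: algebra_simps)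
      finally show ?thesis .
    qed
    ultimately show ?thesis by simp
  qed
  have "w * (\<phi> g - \<iota> lam) - w * (\<phi> g - \<iota> \<mu>) \<in> J" using x1 y1 J_def ideal_diff by blast
  moreover have "w * (\<phi> g - \<iota> lam) - w * (\<phi> g - \<iota> \<mu>) = w * \<iota> (\<mu> - lam)"
    unfolding iota_props(2)[OF i] by (simp add: algebra_simps)
  ultimately have "1 * (w * \<iota> (\<mu> - lam)) * \<iota> (inverse (\<mu> - lam)) \<in> J"
    using ideal_mult J_def by metis
  moreover have "\<mu> - lam \<noteq> 0" unfolding \<mu>_def using lam0 chg by simp
  then have "1 * (w * \<iota> (\<mu> - lam)) * \<iota> (inverse (\<mu> - lam)) = w"
    using iota_props(3)[OF i, of "\<mu> - lam" "inverse (\<mu> - lam)"] iota_props(5)[OF i] by (simp add: mult.assoc)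
  ultimately show ?thesis unfolding w_def J_def a_def e by simp
qed

end
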